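(* Let $E^+$ be a valuation ring of finite rank with fraction field $E$, and let $M$ be a torsionfree $E^+$-module such that $M\otimes_{E^+}E$ is a finite-dimensional $E$-vector space. Then the $E^+/p$-module $M/p$ is a countable filtered colimit of free $E^+/p$-modules of rank at most $\dim_E(M\otimes_{E^+}E)$. In particular, $M/p$ has projective dimension at most $1$ as an $E^+/p$-module.
   Context: $p$ is a prime. The rank of a valuation ring is its number of nonzero prime ideals. *)

theory Defs
  imports Main "HOL.Modules" "HOL-Computational_Algebra.Fraction_Field" "HOL-Computational_Algebra.Primes"
begin

(* The valuation ring E^+ is modelled as a type 'r :: idom; its fraction field E is 'r fract. *)

definition valuation_ring :: "'r::idom itself \<Rightarrow> bool" where
  "valuation_ring _ \<longleftrightarrow>
     (\<forall>x :: 'r fract. (\<exists>a. x = Fract a 1) \<or> (\<exists>a. inverse x = Fract a 1))"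

definition ring_ideal :: "'r::comm_ring_1 set \<Rightarrow> bool" where
  "ring_ideal I \<longleftrightarrow> 0 \<in> I \<and> (\<forall>x\<in>I. \<forall>y\<in>I. x + y \<in> I) \<and> (\<forall>r. \<forall>x\<in>I. r * x \<in> I)"

definition prime_ideal :: "'r::comm_ring_1 set \<Rightarrow> bool" where
  "prime_ideal P \<longleftrightarrow> ring_ideal P \<and> P \<noteq> UNIV \<and> (\<forall>a b. a * b \<in> P \<longrightarrow> a \<in> P \<or> b \<in> P)"

text \<open>rank = number of nonzero prime ideals; finite rank means this set is finite\<close>
definition finite_rank :: "'r::comm_ring_1 itself \<Rightarrow> bool" where
  "finite_rank _ \<longleftrightarrow> finite {P :: 'r set. prime_ideal P \<and> P \<noteq> {0}}"

definition torsionfree :: "('r::comm_ring_1 \<Rightarrow> 'm::ab_group_add \<Rightarrow> 'm) \<Rightarrow> bool" where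
  "torsionfree scale \<longleftrightarrow> (\<forall>r m. scale r m = 0 \<longrightarrow> r = 0 \<or> m = 0)"

text \<open>B (finite, E^+-linearly independent in M) gives a basis {b \<otimes> 1} of M \<otimes> E:
  every element of M becomes a combination of B after multiplying by a nonzero scalar.\<close>
definition tensor_basis :: "('r::comm_ring_1 \<Rightarrow> 'm::ab_group_add \<Rightarrow> 'm) \<Rightarrow> 'm set \<Rightarrow> bool" where
  "tensor_basis scale B \<longleftrightarrow> finite B \<and> \<not> module.dependent scale B \<and>
     (\<forall>m. \<exists>r. r \<noteq> 0 \<and> scale r m \<in> module.span scale B)"

definition in_pM :: "('r::comm_ring_1 \<Rightarrow> 'm::ab_group_add \<Rightarrow> 'm) \<Rightarrow> nat \<Rightarrow> 'm \<Rightarrow> bool" where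
  "in_pM scale p m \<longleftrightarrow> (\<exists>m'. m = scale (of_nat p) m')"

text \<open>M/p is the colimit (in E^+/p-modules) of a countable directed system (index set I \<subseteq> nat,
  preorder le) of free E^+/p-modules F_i = (E^+/p)^(k i) with k i \<le> d.
  Transition maps F_i \<rightarrow> F_j are given by matrices A i j (entries taken mod p):
  e_a \<mapsto> \<Sum>_b A i j a b e_b.  The cocone maps F_i \<rightarrow> M/p send e_a to the class of g i a.
  The colimit property is the standard explicit one for directed colimits of modules:
  jointly surjective, and an element of F_i mapping to 0 dies in some F_j, j \<ge> i.\<close>
definition free_countable_filtered_colimit ::
    "('r::comm_ring_1 \<Rightarrow> 'm::ab_group_add \<Rightarrow> 'm) \<Rightarrow> nat \<Rightarrow> nat \<Rightarrow> bool" where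
  "free_countable_filtered_colimit scale p d \<longleftrightarrow>
    (\<exists>(I::nat set) (le::nat \<Rightarrow> nat \<Rightarrow> bool) (k::nat \<Rightarrow> nat)
       (A::nat \<Rightarrow> nat \<Rightarrow> nat \<Rightarrow> nat \<Rightarrow> 'r) (g::nat \<Rightarrow> nat \<Rightarrow> 'm).
      I \<noteq> {} \<and>
      (\<forall>i\<in>I. le i i) \<and>
      (\<forall>i\<in>I. \<forall>j\<in>I. \<forall>l\<in>I. le i j \<longrightarrow> le j l \<longrightarrow> le i l) \<and>
      (\<forall>i\<in>I. \<forall>j\<in>I. \<exists>l\<in>I. le i l \<and> le j l) \<and>
      (\<forall>i\<in>I. k i \<le> d) \<and>
      (\<forall>i\<in>I. \<forall>a<k i. \<forall>b<k i. of_nat p dvd (A i i a b - (if a = b then 1 else 0))) \<and>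
      (\<forall>i\<in>I. \<forall>j\<in>I. \<forall>l\<in>I. le i j \<longrightarrow> le j l \<longrightarrow>
         (\<forall>a<k i. \<forall>c<k l. of_nat p dvd (A i l a c - (\<Sum>b<k j. A i j a b * A j l b c)))) \<and>
      (\<forall>i\<in>I. \<forall>j\<in>I. le i j \<longrightarrow>
         (\<forall>a<k i. in_pM scale p (g i a - (\<Sum>b<k j. scale (A i j a b) (g j b))))) \<and>
      (\<forall>m. \<exists>i\<in>I. \<exists>c::nat \<Rightarrow> 'r. in_pM scale p (m - (\<Sum>a<k i. scale (c a) (g i a)))) \<and>
      (\<forall>i\<in>I. \<forall>c::nat \<Rightarrow> 'r. in_pM scale p (\<Sum>a<k i. scale (c a) (g i a)) \<longrightarrow>
         (\<exists>j\<in>I. le i j \<and> (\<forall>b<k j. of_nat p dvd (\<Sum>a<k i. c a * A i j a b)))))"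

end

theory Submission
  imports Defs "HOL-Library.Nat_Bijection"
begin

definition inR :: "'r::idom fract \<Rightarrow> bool" where
  "inR x \<longleftrightarrow> (\<exists>a. x = Fract a 1)"

lemma inR_0[simp]: "inR 0" unfolding inR_def by (auto simp: Zero_fract_def)
lemma inR_1[simp]: "inR 1" unfolding inR_def by (auto simp: One_fract_def)
lemma inR_Fract[simp]: "inR (Fract a 1)" unfolding inR_def by auto
lemma inR_mult[intro]: "inR x \<Longrightarrow> inR y \<Longrightarrow> inR (x * y)"
  unfolding inR_def by auto
lemma inR_add[intro]: "inR x \<Longrightarrow> inR y \<Longrightarrow> inR (x + y)"
  unfolding inR_def by auto
lemma inR_minus[intro]: "inR x \<Longrightarrow> inR (- x)"
  unfolding inR_def by auto
lemma inR_diff[intro]: "inR x \<Longrightarrow> inR y \<Longrightarrow> inR (x - y)"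
  unfolding inR_def by auto
lemma inR_power[intro]: "inR x \<Longrightarrow> inR (x ^ n)"
  by (induct n) auto

lemma val_total:
  assumes "valuation_ring TYPE('r::idom)"
  shows "inR (x::'r fract) \<or> inR (inverse x)"
  using assms unfolding valuation_ring_def inR_def by blast

definition csg :: "'r::idom fract set \<Rightarrow> bool" where
  "csg D \<longleftrightarrow> 0 \<notin> D \<and> 1 \<in> D \<and> (\<forall>x\<in>D. \<forall>y\<in>D. x * y \<in> D) \<and> (\<forall>x\<in>D. inverse x \<in> D) \<and>
     (\<forall>x\<in>D. \<forall>y. y \<noteq> 0 \<longrightarrow> inR y \<longrightarrow> inR (x / y) \<longrightarrow> y \<in> D)"

lemma csg_nz: "csg D \<Longrightarrow> x \<in> D \<Longrightarrow> x \<noteq> 0" unfolding csg_def by auto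
lemma csg_one: "csg D \<Longrightarrow> 1 \<in> D" unfolding csg_def by auto
lemma csg_mult: "csg D \<Longrightarrow> x \<in> D \<Longrightarrow> y \<in> D \<Longrightarrow> x * y \<in> D" unfolding csg_def by auto
lemma csg_inv: "csg D \<Longrightarrow> x \<in> D \<Longrightarrow> inverse x \<in> D" unfolding csg_def by auto
lemma csg_conv: "csg D \<Longrightarrow> x \<in> D \<Longrightarrow> y \<noteq> 0 \<Longrightarrow> inR y \<Longrightarrow> inR (x / y) \<Longrightarrow> y \<in> D"
  unfolding csg_def by auto
lemma csg_div: "csg D \<Longrightarrow> x \<in> D \<Longrightarrow> y \<in> D \<Longrightarrow> x / y \<in> D"
  by (simp add: csg_inv csg_mult divide_inverse)
lemma csg_inv_iff: "csg D \<Longrightarrow> inverse x \<in> D \<longleftrightarrow> x \<in> D"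
  by (metis csg_inv inverse_inverse_eq)
lemma csg_power: "csg D \<Longrightarrow> x \<in> D \<Longrightarrow> x ^ n \<in> D"
  by (induct n) (auto simp: csg_one csg_mult)
lemma csg_unit: "csg D \<Longrightarrow> x \<noteq> 0 \<Longrightarrow> inR x \<Longrightarrow> inR (inverse x) \<Longrightarrow> x \<in> D"
  using csg_conv[of D 1 x] by (simp add: csg_one inverse_eq_divide)

lemma csg_chain:
  assumes VR: "valuation_ring TYPE('r::idom)" and D1: "csg (D1::'r fract set)" and D2: "csg D2"
  shows "D1 \<subseteq> D2 \<or> D2 \<subseteq> D1"
proof (rule ccontr)
  assume "\<not> ?thesis"
  then obtain x y where x: "x \<in> D1" "x \<notin> D2" and y: "y \<in> D2" "y \<notin> D1" by blast
  have "\<exists>x'. x' \<in> D1 \<and> x' \<notin> D2 \<and> inR x'"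
    using val_total[OF VR, of x] x D1 D2 csg_inv_iff by blast
  then obtain x' where x': "x' \<in> D1" "x' \<notin> D2" "inR x'" by blast
  have "\<exists>y'. y' \<in> D2 \<and> y' \<notin> D1 \<and> inR y'"
    using val_total[OF VR, of y] y D1 D2 csg_inv_iff by blast
  then obtain y' where y': "y' \<in> D2" "y' \<notin> D1" "inR y'" by blast
  have nz: "x' \<noteq> 0" "y' \<noteq> 0" using x' y' D1 D2 csg_nz by auto
  show False
  proof (cases "inR (x' / y')")
    case True
    then show False using csg_conv[OF D1 x'(1) nz(2) y'(3)] y' by simp
  next
    case False
    then have "inR (y' / x')" using val_total[OF VR, of "x' / y'"] by simp
    then show False using csg_conv[OF D2 y'(1) nz(1) x'(3)] x' by simp
  qed
qed

lemma csg_full: "csg {x::'r::idom fract. x \<noteq> 0}"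
  unfolding csg_def by auto

definition units_R :: "'r::idom fract set" where
  "units_R = {x. x \<noteq> 0 \<and> inR x \<and> inR (inverse x)}"

lemma csg_units: "csg (units_R :: 'r::idom fract set)"
  unfolding csg_def units_R_def
proof (intro conjI ballI allI impI)
  fix x y :: "'r fract"
  assume x: "x \<in> {x. x \<noteq> 0 \<and> inR x \<and> inR (inverse x)}" and y: "y \<noteq> 0" "inR y" "inR (x / y)"
  have e: "inverse y = inverse x * (x / y)" using x y by (simp add: field_simps)
  have "inR (inverse y)" unfolding e using x y by (intro inR_mult) auto
  then show "y \<in> {x. x \<noteq> 0 \<and> inR x \<and> inR (inverse x)}" using x y by auto
qed (auto simp: inverse_mult_distrib)

lemma units_sub: "csg D \<Longrightarrow> units_R \<subseteq> D"
  unfolding units_R_def using csg_unit by blast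

definition pid :: "'r::idom fract set \<Rightarrow> 'r set" where
  "pid D = {a. Fract a 1 \<notin> D}"

lemma Fract_eq0: "Fract a 1 = 0 \<longleftrightarrow> a = 0"
  by (simp add: Zero_fract_def eq_fract)

lemma Fract_add1: "Fract (a + b) 1 = Fract a 1 + Fract b 1" by simp
lemma Fract_mult1: "Fract (a * b) 1 = Fract a 1 * Fract b 1" by simp
lemma Fract_diff1: "Fract (a - b) 1 = Fract a 1 - Fract b 1" by simp
lemma Fract_minus1: "Fract (- a) 1 = - Fract a 1" by simp

lemma fdiv1: "(X::'a::field) \<noteq> 0 \<Longrightarrow> (X + Y) / X = 1 + Y / X" by (simp add: field_simps)
lemma fdiv2: "(Y::'a::field) \<noteq> 0 \<Longrightarrow> (X + Y) / Y = 1 + X / Y" by (simp add: field_simps)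

lemma pid_prime:
  assumes VR: "valuation_ring TYPE('r::idom)" and D: "csg (D::'r fract set)" and ne: "D \<noteq> {x. x \<noteq> 0}"
  shows "prime_ideal (pid D) \<and> pid D \<noteq> {0}"
proof -
  have add: "a + b \<in> pid D" if a: "a \<in> pid D" and b: "b \<in> pid D" for a b
  proof (rule ccontr)
    assume "a + b \<notin> pid D"
    then have ab: "Fract (a + b) 1 \<in> D" unfolding pid_def by auto
    have "a \<noteq> 0" using ab b by (auto simp: pid_def)
    moreover have "b \<noteq> 0" using ab a by (auto simp: pid_def)
    moreover have "a + b \<noteq> 0" using ab csg_nz[OF D] Fract_eq0 by metis
    ultimately show False
    proof (cases "inR (Fract b 1 / Fract a 1)")
      case True
      have "Fract (a + b) 1 / Fract a 1 = 1 + Fract b 1 / Fract a 1"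
        unfolding Fract_add1 using \<open>a \<noteq> 0\<close> Fract_eq0[of a] by (intro fdiv1) simp
      then have "inR (Fract (a + b) 1 / Fract a 1)" using True by auto
      then have "Fract a 1 \<in> D" using csg_conv[OF D ab] \<open>a \<noteq> 0\<close> by (simp add: Fract_eq0)
      then show False using a by (simp add: pid_def)
    next
      case False
      then have T: "inR (Fract a 1 / Fract b 1)" using val_total[OF VR, of "Fract b 1 / Fract a 1"] by simp
      have "Fract (a + b) 1 / Fract b 1 = 1 + Fract a 1 / Fract b 1"
        unfolding Fract_add1 using \<open>b \<noteq> 0\<close> Fract_eq0[of b] by (intro fdiv2) simp
      then have "inR (Fract (a + b) 1 / Fract b 1)" using T by auto
      then have "Fract b 1 \<in> D" using csg_conv[OF D ab] \<open>b \<noteq> 0\<close> by (simp add: Fract_eq0)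
      then show False using b by (simp add: pid_def)
    qed
  qed
  have mul: "r * x \<in> pid D" if x: "x \<in> pid D" for r x
  proof (rule ccontr)
    assume "r * x \<notin> pid D"
    then have rx: "Fract (r * x) 1 \<in> D" unfolding pid_def by auto
    have "Fract (r * x) 1 \<noteq> 0" using rx csg_nz[OF D] by blast
    then have "r \<noteq> 0" "x \<noteq> 0" by (auto simp: Fract_eq0)
    have "Fract (r * x) 1 / Fract x 1 = Fract r 1" using \<open>x \<noteq> 0\<close> by (simp add: eq_fract)
    then have "Fract x 1 \<in> D" using csg_conv[OF D rx, of "Fract x 1"] \<open>x \<noteq> 0\<close> by (simp add: Fract_eq0)
    then show False using x by (simp add: pid_def)
  qed
  have z: "0 \<in> pid D" using csg_nz[OF D] by (auto simp: pid_def Zero_fract_def)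
  have one: "1 \<notin> pid D" using csg_one[OF D] by (simp add: pid_def One_fract_def[symmetric])
  have pr: "a \<in> pid D \<or> b \<in> pid D" if "a * b \<in> pid D" for a b
    using that csg_mult[OF D, of "Fract a 1" "Fract b 1"] by (auto simp: pid_def)
  have nz: "pid D \<noteq> {0}"
  proof -
    obtain x where x: "x \<noteq> 0" "x \<notin> D" using ne csg_nz[OF D] by blast
    have "\<exists>y. y \<noteq> 0 \<and> y \<notin> D \<and> inR y"
      using val_total[OF VR, of x] x csg_inv_iff[OF D, of x] by (metis inverse_nonzero_iff_nonzero)
    then obtain y where y: "y \<noteq> 0" "y \<notin> D" "inR y" by blast
    then obtain a where "y = Fract a 1" unfolding inR_def by blast
    then have "a \<in> pid D" "a \<noteq> 0" using y by (auto simp: pid_def Zero_fract_def)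
    then show ?thesis by blast
  qed
  show ?thesis unfolding prime_ideal_def ring_ideal_def using add mul z one pr nz by blast
qed

lemma pid_inj:
  assumes VR: "valuation_ring TYPE('r::idom)" and D1: "csg (D1::'r fract set)" and D2: "csg D2"
    and eq: "pid D1 = pid D2"
  shows "D1 \<subseteq> D2"
proof
  fix x assume x: "x \<in> D1"
  have "Fract a 1 \<in> D2" if "Fract a 1 \<in> D1" for a
    using that eq unfolding pid_def by blast
  then show "x \<in> D2"
    using val_total[OF VR, of x] x csg_inv_iff[OF D1, of x] csg_inv_iff[OF D2, of x]
    unfolding inR_def by metis
qed

lemma csg_finite:
  assumes VR: "valuation_ring TYPE('r::idom)" and FR: "finite_rank TYPE('r)"
  shows "finite {D :: 'r fract set. csg D}"
proof -
  let ?C = "{D :: 'r fract set. csg D \<and> D \<noteq> {x. x \<noteq> 0}}"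
  have "inj_on pid ?C"
    by (rule inj_onI) (use pid_inj[OF VR] in blast)
  moreover have "pid ` ?C \<subseteq> {P :: 'r set. prime_ideal P \<and> P \<noteq> {0}}"
    using pid_prime[OF VR] by blast
  ultimately have "finite ?C"
    using FR unfolding finite_rank_def by (meson finite_imageD finite_subset)
  then have "finite (insert {x. x \<noteq> 0} ?C)" by simp
  moreover have "{D :: 'r fract set. csg D} \<subseteq> insert {x. x \<noteq> 0} ?C" by blast
  ultimately show ?thesis using finite_subset by blast
qed




lemma arch:
  assumes VR: "valuation_ring TYPE('r::idom)" and D: "csg (D::'r fract set)" and D': "csg D'"
    and sub: "D' \<subset> D" and maxl: "\<And>E. csg E \<Longrightarrow> E \<subset> D \<Longrightarrow> E \<subseteq> D'"
    and g: "\<gamma> \<in> D" "\<gamma> \<notin> D'" "inR \<gamma>" and x: "x \<in> D"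
  shows "\<exists>N. inR (\<gamma>^N / x) \<and> inR (\<gamma>^N * x)"
proof -
  define H where "H = {x. x \<noteq> 0 \<and> (\<exists>N. inR (\<gamma>^N / x) \<and> inR (\<gamma>^N * x))}"
  have gnz: "\<gamma> \<noteq> 0" using g D csg_nz by blast
  have cH: "csg H" unfolding csg_def
  proof (intro conjI ballI allI impI)
    show "0 \<notin> H" unfolding H_def by simp
    show "1 \<in> H" unfolding H_def by (auto intro!: exI[of _ 0])
  next
    fix x y assume x: "x \<in> H" and y: "y \<in> H"
    then obtain N1 N2 where 1: "inR (\<gamma>^N1 / x)" "inR (\<gamma>^N1 * x)" and 2: "inR (\<gamma>^N2 / y)" "inR (\<gamma>^N2 * y)"
      and nz: "x \<noteq> 0" "y \<noteq> 0" unfolding H_def by blast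
    have e1: "\<gamma>^(N1+N2) / (x * y) = (\<gamma>^N1 / x) * (\<gamma>^N2 / y)" by (simp add: power_add)
    have e2: "\<gamma>^(N1+N2) * (x * y) = (\<gamma>^N1 * x) * (\<gamma>^N2 * y)" by (simp add: power_add ac_simps)
    have "inR (\<gamma>^(N1+N2) / (x * y))" unfolding e1 using 1 2 by blast
    moreover have "inR (\<gamma>^(N1+N2) * (x * y))" unfolding e2 using 1 2 by blast
    ultimately show "x * y \<in> H" unfolding H_def using nz by auto
  next
    fix x assume "x \<in> H"
    then show "inverse x \<in> H" unfolding H_def by (auto simp: divide_inverse)
  next
    fix x y assume x: "x \<in> H" and y: "y \<noteq> 0" "inR y" "inR (x / y)"
    then obtain N where 1: "inR (\<gamma>^N / x)" and nz: "x \<noteq> 0" unfolding H_def by blast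
    have e: "\<gamma>^N / y = (\<gamma>^N / x) * (x / y)" using nz by simp
    have "inR (\<gamma>^N / y)" unfolding e using 1 y by blast
    moreover have "inR (\<gamma>^N * y)" using g y by auto
    ultimately show "y \<in> H" unfolding H_def using y by auto
  qed
  have HD: "H \<subseteq> D"
  proof
    fix x assume "x \<in> H"
    then obtain N where 1: "inR (\<gamma>^N / x)" "inR (\<gamma>^N * x)" and nz: "x \<noteq> 0" unfolding H_def by blast
    have gN: "\<gamma>^N \<in> D" using csg_power[OF D g(1)] .
    show "x \<in> D"
    proof (cases "inR x")
      case True
      show ?thesis using csg_conv[OF D gN nz True 1(1)] by blast
    next
      case False
      then have "inR (inverse x)" using val_total[OF VR] by blast
      moreover have "\<gamma>^N / inverse x = \<gamma>^N * x" by (simp add: divide_inverse)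
      ultimately have "inverse x \<in> D" using csg_conv[OF D gN, of "inverse x"] nz 1 by simp
      then show ?thesis using csg_inv_iff[OF D] by blast
    qed
  qed
  have gH: "\<gamma> \<in> H" unfolding H_def using gnz g by (auto intro!: exI[of _ 1])
  have "D' \<subseteq> H" using csg_chain[OF VR cH D'] gH g by blast
  then have "H = D" using maxl[OF cH] HD gH g by blast
  then show ?thesis using x unfolding H_def by blast
qed

lemma e1: fixes b s' g :: "'a::field"
  assumes "b \<noteq> 0" "s' \<noteq> 0" "g \<noteq> 0"
  shows "b^N * g^(2*M) / (s'^N * g^M) = g^M / (s' / b)^N"
proof -
  have "g^(2*M) = g^M * g^M" by (simp add: mult_2 power_add)
  then show ?thesis using assms by (simp add: power_divide field_simps)
qed
lemma e2: fixes b s' g s t :: "'a::field"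
  assumes "b \<noteq> 0" "s' \<noteq> 0" "g \<noteq> 0" "s \<noteq> 0" "t \<noteq> 0"
  shows "(t / s)^N * (b^N * g^n0 / (t^N * g^M)) * ((s/s')^N / g) = b^N * g^n0 / (s'^N * g^M * g)"
  using assms by (simp add: power_divide field_simps)
lemma e3: fixes b s' g :: "'a::field"
  assumes "b \<noteq> 0" "s' \<noteq> 0" "g \<noteq> 0"
  shows "(b^N * g^0 / (s'^N * g^M * g)) * (g^M * (s' / b)^N) = inverse g"
  using assms by (simp add: power_divide field_simps)
lemma e4: fixes b s' g :: "'a::field"
  assumes "g \<noteq> 0"
  shows "b^N * g^(Suc m) / (s'^N * g^M * g) = b^N * g^m / (s'^N * g^M)"
  using assms by (simp add: field_simps)

lemma coinit_aux:
  assumes VR: "valuation_ring TYPE('r::idom)" and FR: "finite_rank TYPE('r)"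
  shows "\<forall>(D::'r fract set) S. card {E. csg E \<and> E \<subset> D} = n \<longrightarrow> csg D \<longrightarrow> S \<subseteq> D \<longrightarrow> S \<noteq> {} \<longrightarrow>
    (\<exists>f::nat \<Rightarrow> 'r fract. (\<forall>n. f n \<in> S) \<and> (\<forall>s\<in>S. \<exists>n. inR (s / f n)))"
proof (induction n rule: less_induct)
  case (less n)
  note IH = less.IH
  show ?case
  proof (intro allI impI)
  fix D :: "'r fract set" and S
  assume cardn: "card {E. csg E \<and> E \<subset> D} = n" and D: "csg D" and SD: "S \<subseteq> D" and Sne: "S \<noteq> {}"
  have fin: "finite {E. csg E \<and> E \<subset> D}"
    using csg_finite[OF VR FR] by (rule finite_subset[rotated]) blast
  have Snz: "s \<noteq> 0" if "s \<in> S" for s using that SD D csg_nz by blast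
  show "\<exists>f::nat \<Rightarrow> 'r fract. (\<forall>n. f n \<in> S) \<and> (\<forall>s\<in>S. \<exists>n. inR (s / f n))"
  proof (cases "{E. csg E \<and> E \<subset> D} = {}")
    case True
    then have "units_R = D" using units_sub[OF D] csg_units by blast
    obtain s0 where s0: "s0 \<in> S" using Sne by blast
    have "inR (s / s0)" if "s \<in> S" for s
      using csg_div[OF D, of s s0] that s0 SD \<open>units_R = D\<close> unfolding units_R_def by blast
    then show ?thesis using s0 by (intro exI[of _ "\<lambda>_. s0"]) auto
  next
    case False
    obtain D' where D'in: "D' \<in> {E. csg E \<and> E \<subset> D}" and D'max: "\<forall>E\<in>{E. csg E \<and> E \<subset> D}. D' \<le> E \<longrightarrow> D' = E"
      using finite_has_maximal[OF fin False] by blast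
    have cD': "csg D'" and sub: "D' \<subset> D" using D'in by auto
    have maxl: "E \<subseteq> D'" if "csg E" "E \<subset> D" for E
      using csg_chain[OF VR that(1) cD'] D'max that by blast
    obtain x where x: "x \<in> D" "x \<notin> D'" using sub by blast
    have "\<exists>\<gamma>. \<gamma> \<in> D \<and> \<gamma> \<notin> D' \<and> inR \<gamma>"
      using val_total[OF VR, of x] x csg_inv_iff[OF D, of x] csg_inv_iff[OF cD', of x] by blast
    then obtain \<gamma> where g: "\<gamma> \<in> D" "\<gamma> \<notin> D'" "inR \<gamma>" by blast
    have gnz: "\<gamma> \<noteq> 0" using g D csg_nz by blast
    show ?thesis
    proof (cases "\<exists>s0\<in>S. \<forall>s\<in>S. inR (s / s0) \<or> s / s0 \<in> D'")
      case True
      then obtain s0 where s0: "s0 \<in> S" and s0p: "\<forall>s\<in>S. inR (s / s0) \<or> s / s0 \<in> D'" by blast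
      have s0nz: "s0 \<noteq> 0" using Snz s0 by blast
      define S' where "S' = (\<lambda>s. s / s0) ` {s\<in>S. s / s0 \<in> D'}"
      have 1: "1 \<in> S'" unfolding S'_def using s0 s0nz csg_one[OF cD'] by (auto intro!: image_eqI[of _ _ s0])
      have "{E. csg E \<and> E \<subset> D'} \<subseteq> {E. csg E \<and> E \<subset> D}" using sub by (auto intro: psubset_trans)
      moreover have "D' \<in> {E. csg E \<and> E \<subset> D} - {E. csg E \<and> E \<subset> D'}" using sub cD' by simp
      ultimately have "{E. csg E \<and> E \<subset> D'} \<subset> {E. csg E \<and> E \<subset> D}" by blast
      then have lt: "card {E. csg E \<and> E \<subset> D'} < card {E. csg E \<and> E \<subset> D}"
        by (rule psubset_card_mono[OF fin])
      have "S' \<subseteq> D'" unfolding S'_def by blast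
      have "S' \<noteq> {}" using 1 by blast
      have lt': "card {E. csg E \<and> E \<subset> D'} < n" using lt cardn by simp
      have H: "card {E. csg E \<and> E \<subset> D'} = card {E. csg E \<and> E \<subset> D'} \<longrightarrow> csg D' \<longrightarrow> S' \<subseteq> D' \<longrightarrow> S' \<noteq> {} \<longrightarrow>
          (\<exists>f::nat \<Rightarrow> 'r fract. (\<forall>n. f n \<in> S') \<and> (\<forall>s\<in>S'. \<exists>n. inR (s / f n)))"
        by (rule IH[OF lt', THEN spec, THEN spec])
      have "\<exists>f::nat \<Rightarrow> 'r fract. (\<forall>n. f n \<in> S') \<and> (\<forall>s\<in>S'. \<exists>n. inR (s / f n))"
        using H cD' \<open>S' \<subseteq> D'\<close> \<open>S' \<noteq> {}\<close> by simp
      then obtain f' :: "nat \<Rightarrow> 'r fract" where f'S: "\<forall>n. f' n \<in> S'" and f'c: "\<forall>s\<in>S'. \<exists>n. inR (s / f' n)"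
        by blast
      have A: "s0 * f' n \<in> S" for n
      proof -
        obtain s where "s \<in> S" "f' n = s / s0" using f'S unfolding S'_def by blast
        then have "s0 * f' n = s" using s0nz by simp
        then show ?thesis using \<open>s \<in> S\<close> by simp
      qed
      have B: "\<exists>n. inR (s / (s0 * f' n))" if s: "s \<in> S" for s
      proof (cases "s / s0 \<in> D'")
        case True
        then have "s / s0 \<in> S'" unfolding S'_def using s by blast
        then obtain n where n: "inR ((s / s0) / f' n)" using f'c by blast
        have "s / (s0 * f' n) = (s / s0) / f' n" by simp
        then show ?thesis using n by metis
      next
        case False
        then have a: "inR (s / s0)" using s0p s by blast
        obtain n where b: "inR (1 / f' n)" using f'c 1 by blast
        have "s / (s0 * f' n) = (s / s0) * (1 / f' n)" by simp
        then show ?thesis using a b by (metis inR_mult)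
      qed
      show ?thesis
        apply (rule exI[where x="\<lambda>n. s0 * f' n"])
        using A B by blast
    next
      case False
      then have C2: "\<forall>s0\<in>S. \<exists>s\<in>S. \<not> inR (s / s0) \<and> s / s0 \<notin> D'" by blast
      obtain b where b: "b \<in> S" using Sne by blast
      have bnz: "b \<noteq> 0" using Snz b by blast
      define P where "P n M N t \<longleftrightarrow> t \<in> S \<and> inR (b^N * \<gamma>^n / (t^N * \<gamma>^M))" for n M N t
      define tt where "tt n M N = (if \<exists>t. P n M N t then SOME t. P n M N t else b)" for n M N
      have ttS: "tt n M N \<in> S" for n M N
      proof (cases "\<exists>t. P n M N t")
        case True
        define t0 where "t0 = (SOME t. P n M N t)"
        have "P n M N t0" unfolding t0_def using True by (rule someI_ex)
        then have "t0 \<in> S" unfolding P_def by blast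
        moreover have "tt n M N = t0" unfolding tt_def t0_def using True by simp
        ultimately show ?thesis by simp
      next
        case False
        then show ?thesis using b by (simp add: tt_def)
      qed
      define f where "f k = (case prod_decode k of (n, k') \<Rightarrow> (case prod_decode k' of (M, N) \<Rightarrow> tt n M N))" for k
      have fS: "f k \<in> S" for k unfolding f_def by (simp add: ttS split: prod.split)
      have fenc: "f (prod_encode (n, prod_encode (M, N))) = tt n M N" for n M N
        unfolding f_def by simp
      have "\<exists>k. inR (s / f k)" if s: "s \<in> S" for s
      proof -
        have snz: "s \<noteq> 0" using Snz s by blast
        obtain s' where s': "s' \<in> S" "\<not> inR (s' / s)" "s' / s \<notin> D'" using C2 s by blast
        have s'nz: "s' \<noteq> 0" using Snz s' by blast
        define \<delta> where "\<delta> = s / s'"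
        have dR: "inR \<delta>" using val_total[OF VR, of "s' / s"] s' unfolding \<delta>_def by simp
        have dD: "\<delta> \<in> D" unfolding \<delta>_def using csg_div[OF D] s s' SD by blast
        have dD': "\<delta> \<notin> D'" unfolding \<delta>_def using s' csg_inv_iff[OF cD', of "s / s'"] by simp
        obtain N0 where "inR (\<delta>^N0 / \<gamma>)"
          using arch[OF VR D cD' sub maxl dD dD' dR g(1)] by blast
        define N where "N = Suc N0"
        have dN: "inR (\<delta>^N / \<gamma>)" unfolding N_def using \<open>inR (\<delta>^N0 / \<gamma>)\<close> dR
          by (metis inR_mult power_Suc times_divide_eq_right)
        have xD: "(s' / b)^N \<in> D" using csg_power[OF D csg_div[OF D, of s' b]] s' b SD by blast
        obtain M where M1: "inR (\<gamma>^M / (s' / b)^N)" and M2: "inR (\<gamma>^M * (s' / b)^N)"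
          using arch[OF VR D cD' sub maxl g xD] by blast
        define Q where "Q n \<longleftrightarrow> inR (b^N * \<gamma>^n / (s'^N * \<gamma>^M))" for n
        have "Q (2 * M)"
        proof -
          have "b^N * \<gamma>^(2*M) / (s'^N * \<gamma>^M) = \<gamma>^M / (s' / b)^N"
            by (rule e1[OF bnz s'nz gnz])
          then show ?thesis unfolding Q_def using M1 by simp
        qed
        define n0 where "n0 = (LEAST n. Q n)"
        have Qn0: "Q n0" unfolding n0_def using LeastI[of Q, OF \<open>Q (2*M)\<close>] .
        have Pn0: "P n0 M N s'" using Qn0 s' unfolding P_def Q_def by simp
        define t where "t = tt n0 M N"
        have Pt: "P n0 M N t" unfolding t_def tt_def using Pn0 by (auto intro: someI_ex)
        have tnz: "t \<noteq> 0" using Pt Snz unfolding P_def by blast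
        have "inR (s / t)"
        proof (rule ccontr)
          assume "\<not> inR (s / t)"
          then have ts: "inR (t / s)" using val_total[OF VR, of "s / t"] by simp
          have prod: "inR ((t / s)^N * (b^N * \<gamma>^n0 / (t^N * \<gamma>^M)) * (\<delta>^N / \<gamma>))"
            using ts Pt dN unfolding P_def by (intro inR_mult inR_power) auto
          have eq: "(t / s)^N * (b^N * \<gamma>^n0 / (t^N * \<gamma>^M)) * (\<delta>^N / \<gamma>)
              = b^N * \<gamma>^n0 / (s'^N * \<gamma>^M * \<gamma>)"
            unfolding \<delta>_def by (rule e2[OF bnz s'nz gnz snz tnz])
          show False
          proof (cases n0)
            case 0
            have "inR ((b^N * \<gamma>^n0 / (s'^N * \<gamma>^M * \<gamma>)) * (\<gamma>^M * (s' / b)^N))"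
              using prod eq M2 by (metis inR_mult)
            moreover have "(b^N * \<gamma>^n0 / (s'^N * \<gamma>^M * \<gamma>)) * (\<gamma>^M * (s' / b)^N) = inverse \<gamma>"
              unfolding 0 by (rule e3[OF bnz s'nz gnz])
            ultimately have "inR (inverse \<gamma>)" by simp
            then have "\<gamma> \<in> D'" using csg_unit[OF cD' gnz g(3)] by blast
            then show False using g by blast
          next
            case (Suc m)
            have "b^N * \<gamma>^n0 / (s'^N * \<gamma>^M * \<gamma>) = b^N * \<gamma>^m / (s'^N * \<gamma>^M)"
              unfolding Suc by (rule e4[OF gnz])
            then have "Q m" unfolding Q_def using prod eq by simp
            moreover have "m < n0" using Suc by simp
            ultimately show False unfolding n0_def using not_less_Least by blast
          qed
        qed
        then show ?thesis using fenc unfolding t_def by metis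
      qed
      then show ?thesis using fS by blast
    qed
  qed
  qed
qed

lemma coinit:
  assumes VR: "valuation_ring TYPE('r::idom)" and FR: "finite_rank TYPE('r)"
    and "csg (D::'r fract set)" "S \<subseteq> D" "S \<noteq> {}"
  shows "\<exists>f::nat \<Rightarrow> 'r fract. (\<forall>n. f n \<in> S) \<and> (\<forall>s\<in>S. \<exists>n. inR (s / f n))"
  using coinit_aux[OF VR FR] assms(3-) by blast

locale msetup = module scale for scale :: "'r::idom \<Rightarrow> 'm::ab_group_add \<Rightarrow> 'm" (infixr \<open>*s\<close> 75) +
  fixes B :: "'m set"
  assumes VR: "valuation_ring TYPE('r)" and FR: "finite_rank TYPE('r)"
    and TF: "torsionfree scale" and TB: "tensor_basis scale B"
begin

lemma finB: "finite B" using TB unfolding tensor_basis_def by blast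
lemma indepB: "independent B" using TB unfolding tensor_basis_def by blast

lemma rep_ex: "\<exists>r u. r \<noteq> 0 \<and> r *s m = (\<Sum>v\<in>B. u v *s v)"
proof -
  obtain r where "r \<noteq> 0" "r *s m \<in> span B" using TB unfolding tensor_basis_def by blast
  then show ?thesis using span_finite[OF finB] by auto
qed

definition rep :: "'m \<Rightarrow> 'r \<times> ('m \<Rightarrow> 'r)" where
  "rep m = (SOME p. fst p \<noteq> 0 \<and> fst p *s m = (\<Sum>v\<in>B. snd p v *s v))"

lemma rep: "fst (rep m) \<noteq> 0 \<and> fst (rep m) *s m = (\<Sum>v\<in>B. snd (rep m) v *s v)"
proof -
  obtain r u where "r \<noteq> 0 \<and> r *s m = (\<Sum>v\<in>B. u v *s v)" using rep_ex by blast
  then have "\<exists>p. fst p \<noteq> 0 \<and> fst p *s m = (\<Sum>v\<in>B. snd p v *s v)" by (intro exI[of _ "(r, u)"]) simp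
  then show ?thesis unfolding rep_def by (rule someI_ex)
qed

lemma uniqB:
  assumes "(\<Sum>v\<in>B. u v *s v) = (\<Sum>v\<in>B. w v *s v)" "v \<in> B"
  shows "u v = w v"
proof -
  have "(\<Sum>v\<in>B. (u v - w v) *s v) = 0"
    using assms(1) by (simp add: scale_left_diff_distrib sum_subtractf)
  then have "u v - w v = 0" using independentD[OF indepB finB order_refl, of "\<lambda>v. u v - w v"] assms(2) by blast
  then show ?thesis by simp
qed

definition crd :: "'m \<Rightarrow> 'm \<Rightarrow> 'r fract" where
  "crd m v = Fract (snd (rep m) v) (fst (rep m))"

lemma scale_sumB: "a *s (\<Sum>v\<in>B. u v *s v) = (\<Sum>v\<in>B. (a * u v) *s v)"
  by (simp add: scale_sum_right)

lemma crd_char: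
  assumes r: "r \<noteq> 0" and e: "r *s m = (\<Sum>v\<in>B. u v *s v)" and v: "v \<in> B"
  shows "crd m v = Fract (u v) r"
proof -
  let ?r0 = "fst (rep m)" and ?u0 = "snd (rep m)"
  have r0: "?r0 \<noteq> 0" and e0: "?r0 *s m = (\<Sum>v\<in>B. ?u0 v *s v)" using rep by blast+
  have "(\<Sum>v\<in>B. (r * ?u0 v) *s v) = r *s (?r0 *s m)" using e0 scale_sumB by simp
  also have "\<dots> = ?r0 *s (r *s m)" by (simp add: mult.commute)
  also have "\<dots> = (\<Sum>v\<in>B. (?r0 * u v) *s v)" using e scale_sumB by simp
  finally have "r * ?u0 v = ?r0 * u v" using uniqB[of "\<lambda>v. r * ?u0 v" "\<lambda>v. ?r0 * u v" v] v by blast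
  then show ?thesis unfolding crd_def using r r0 by (simp add: eq_fract mult.commute)
qed

lemma crd_add: "v \<in> B \<Longrightarrow> crd (m1 + m2) v = crd m1 v + crd m2 v"
proof -
  assume v: "v \<in> B"
  obtain r1 u1 r2 u2 where 1: "r1 \<noteq> 0" "r1 *s m1 = (\<Sum>v\<in>B. u1 v *s v)"
    and 2: "r2 \<noteq> 0" "r2 *s m2 = (\<Sum>v\<in>B. u2 v *s v)" using rep_ex by meson
  have "(r1 * r2) *s (m1 + m2) = r2 *s (r1 *s m1) + r1 *s (r2 *s m2)"
    by (simp add: scale_right_distrib mult.commute)
  also have "\<dots> = (\<Sum>v\<in>B. (r2 * u1 v + r1 * u2 v) *s v)"
    using 1 2 by (simp add: scale_sumB scale_left_distrib sum.distrib)
  finally have "crd (m1 + m2) v = Fract (r2 * u1 v + r1 * u2 v) (r1 * r2)"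
    using crd_char[of "r1 * r2" "m1 + m2" "\<lambda>v. r2 * u1 v + r1 * u2 v" v] v 1 2 by simp
  moreover have "crd m1 v = Fract (u1 v) r1" "crd m2 v = Fract (u2 v) r2"
    using crd_char[OF _ _ v] 1 2 by auto
  ultimately show ?thesis using 1 2 by (simp add: ac_simps)
qed

lemma crd_scale: "v \<in> B \<Longrightarrow> crd (a *s m) v = Fract a 1 * crd m v"
proof -
  assume v: "v \<in> B"
  obtain r u where 1: "r \<noteq> 0" "r *s m = (\<Sum>v\<in>B. u v *s v)" using rep_ex by meson
  have "r *s (a *s m) = a *s (r *s m)" by (rule scale_left_commute)
  also have "\<dots> = (\<Sum>v\<in>B. (a * u v) *s v)" using 1 scale_sumB by simp
  finally have "crd (a *s m) v = Fract (a * u v) r" using crd_char[of r "a *s m" "\<lambda>v. a * u v" v] 1(1) v by blast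
  moreover have "crd m v = Fract (u v) r" using crd_char[OF 1 v] .
  ultimately show ?thesis by simp
qed

lemma crd_zero: "v \<in> B \<Longrightarrow> crd 0 v = 0"
  using crd_scale[of v 0 0] by (simp add: Zero_fract_def[symmetric])

lemma crd_minus: "v \<in> B \<Longrightarrow> crd (- m) v = - crd m v"
proof -
  assume "v \<in> B"
  then have "crd ((-1) *s m) v = Fract (-1) 1 * crd m v" by (rule crd_scale)
  moreover have "Fract (-1) 1 = (-1 :: 'r fract)" by (simp add: One_fract_def)
  ultimately show ?thesis by simp
qed

lemma crd_diff: "v \<in> B \<Longrightarrow> crd (m1 - m2) v = crd m1 v - crd m2 v"
  using crd_add[of v m1 "- m2"] crd_minus[of v m2] by simp

lemma crd_sum: "v \<in> B \<Longrightarrow> crd (\<Sum>a\<in>A. f a) v = (\<Sum>a\<in>A. crd (f a) v)"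
  by (induct A rule: infinite_finite_induct) (auto simp: crd_zero crd_add)

lemma crd_inj: assumes "\<forall>v\<in>B. crd m v = 0" shows "m = 0"
proof -
  obtain r u where 1: "r \<noteq> 0" "r *s m = (\<Sum>v\<in>B. u v *s v)" using rep_ex by meson
  have "u v = 0" if "v \<in> B" for v
    using crd_char[OF 1 that] assms that 1(1) by (simp add: Zero_fract_def eq_fract)
  then have "r *s m = 0" using 1 by simp
  then show ?thesis using TF 1(1) unfolding torsionfree_def by blast
qed

end

context msetup begin

abbreviation "d \<equiv> card B"

definition e :: "nat \<Rightarrow> 'm" where "e = (SOME h. bij_betw h {..<card B} B)"

lemma e_bij: "bij_betw e {..<d} B"
proof -
  have "\<exists>h. bij_betw h {..<card B} B"
    using ex_bij_betw_nat_finite[OF finB] by (simp add: lessThan_atLeast0)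
  then show ?thesis unfolding e_def by (rule someI_ex)
qed

lemma eB: "j < d \<Longrightarrow> e j \<in> B" using e_bij unfolding bij_betw_def by auto
lemma B_e: "v \<in> B \<Longrightarrow> \<exists>j<d. v = e j" using e_bij unfolding bij_betw_def by auto

definition co :: "'m \<Rightarrow> nat \<Rightarrow> 'r fract" where "co m j = crd m (e j)"

lemma co_add: "j < d \<Longrightarrow> co (m1 + m2) j = co m1 j + co m2 j" unfolding co_def by (simp add: crd_add eB)
lemma co_diff: "j < d \<Longrightarrow> co (m1 - m2) j = co m1 j - co m2 j" unfolding co_def by (simp add: crd_diff eB)
lemma co_scale: "j < d \<Longrightarrow> co (a *s m) j = Fract a 1 * co m j" unfolding co_def by (simp add: crd_scale eB)
lemma co_zero: "j < d \<Longrightarrow> co 0 j = 0" unfolding co_def by (simp add: crd_zero eB)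
lemma co_sum: "j < d \<Longrightarrow> co (\<Sum>a\<in>A. f a) j = (\<Sum>a\<in>A. co (f a) j)" unfolding co_def by (simp add: crd_sum eB)

definition Mk :: "nat \<Rightarrow> 'm set" where "Mk k = {m. \<forall>j. k \<le> j \<longrightarrow> j < d \<longrightarrow> co m j = 0}"

lemma Mk_0: "Mk 0 = {0}"
proof
  show "Mk 0 \<subseteq> {0}"
  proof
    fix m assume "m \<in> Mk 0"
    then have "\<forall>v\<in>B. crd m v = 0" unfolding Mk_def co_def using B_e by fastforce
    then show "m \<in> {0}" using crd_inj by blast
  qed
  show "{0} \<subseteq> Mk 0" unfolding Mk_def using co_zero by simp
qed

lemma Mk_full: "Mk d = UNIV" unfolding Mk_def by auto
lemma Mk_mono: "k \<le> k' \<Longrightarrow> Mk k \<subseteq> Mk k'" unfolding Mk_def by auto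
lemma Mk_diff: "m1 \<in> Mk k \<Longrightarrow> m2 \<in> Mk k \<Longrightarrow> m1 - m2 \<in> Mk k" unfolding Mk_def by (simp add: co_diff)
lemma Mk_add: "m1 \<in> Mk k \<Longrightarrow> m2 \<in> Mk k \<Longrightarrow> m1 + m2 \<in> Mk k" unfolding Mk_def by (simp add: co_add)
lemma Mk_scale: "m \<in> Mk k \<Longrightarrow> a *s m \<in> Mk k" unfolding Mk_def by (simp add: co_scale)
lemma Mk_down: assumes "m \<in> Mk (Suc k)" "co m k = 0" shows "m \<in> Mk k"
  unfolding Mk_def
proof (intro CollectI allI impI)
  fix j assume j: "k \<le> j" "j < d"
  then have "j = k \<or> Suc k \<le> j" by arith
  then show "co m j = 0" using assms j unfolding Mk_def by blast
qed
lemma Mk_co: "m \<in> Mk k \<Longrightarrow> k \<le> j \<Longrightarrow> j < d \<Longrightarrow> co m j = 0" unfolding Mk_def by auto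

lemma gen_k:
  assumes k: "k < d"
  shows "\<exists>yk::nat \<Rightarrow> 'm. (\<forall>n. yk n \<in> Mk (Suc k)) \<and> (\<forall>m\<in>Mk (Suc k). \<exists>n a. m - a *s yk n \<in> Mk k)"
proof -
  define J where "J = {co m k | m. m \<in> Mk (Suc k)} - {0}"
  show ?thesis
  proof (cases "J = {}")
    case True
    have "m - 0 *s 0 \<in> Mk k" if "m \<in> Mk (Suc k)" for m
    proof -
      have "co m k = 0" using True that unfolding J_def by blast
      then show ?thesis using Mk_down that by simp
    qed
    moreover have "(0::'m) \<in> Mk (Suc k)" using Mk_0 Mk_mono[of 0 "Suc k"] by blast
    ultimately show ?thesis
      by (intro exI[of _ "\<lambda>_::nat. 0::'m"]) auto
  next
    case False
    have "J \<subseteq> {x. x \<noteq> 0}" unfolding J_def by blast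
    from coinit[OF VR FR csg_full this False]
    obtain f :: "nat \<Rightarrow> 'r fract" where fJ: "\<forall>n. f n \<in> J" and fc: "\<forall>s\<in>J. \<exists>n. inR (s / f n)" by blast
    define yk where "yk n = (SOME m. m \<in> Mk (Suc k) \<and> co m k = f n)" for n
    have yk: "yk n \<in> Mk (Suc k) \<and> co (yk n) k = f n" for n
    proof -
      have "f n \<in> J" using fJ by blast
      then have "\<exists>m. m \<in> Mk (Suc k) \<and> co m k = f n" unfolding J_def by auto
      then show ?thesis unfolding yk_def by (rule someI_ex)
    qed
    have "\<exists>n a. m - a *s yk n \<in> Mk k" if m: "m \<in> Mk (Suc k)" for m
    proof (cases "co m k = 0")
      case True
      have "m - 0 *s yk 0 \<in> Mk k" using Mk_down[OF m True] by simp
      then show ?thesis by blast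
    next
      case False
      then have "co m k \<in> J" unfolding J_def using m by blast
      then obtain n where "inR (co m k / f n)" using fc by blast
      then obtain a where a: "co m k / f n = Fract a 1" unfolding inR_def by blast
      have fnz: "f n \<noteq> 0" using fJ unfolding J_def by blast
      have "co (m - a *s yk n) k = co m k - Fract a 1 * f n"
        using k yk by (simp add: co_diff co_scale)
      also have "\<dots> = 0" unfolding a[symmetric] using fnz by simp
      finally have "co (m - a *s yk n) k = 0" .
      moreover have "m - a *s yk n \<in> Mk (Suc k)" using m yk[of n] by (intro Mk_diff Mk_scale) auto
      ultimately show ?thesis using Mk_down by blast
    qed
    then show ?thesis using yk by (intro exI[of _ yk]) auto
  qed
qed

lemma gen:
  "\<exists>y::nat \<Rightarrow> nat \<Rightarrow> 'm. \<forall>k<d. (\<forall>n. y k n \<in> Mk (Suc k)) \<and> (\<forall>m\<in>Mk (Suc k). \<exists>n a. m - a *s y k n \<in> Mk k)"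
proof -
  have "\<forall>k. \<exists>yk::nat \<Rightarrow> 'm. k < d \<longrightarrow> (\<forall>n. yk n \<in> Mk (Suc k)) \<and> (\<forall>m\<in>Mk (Suc k). \<exists>n a. m - a *s yk n \<in> Mk k)"
    using gen_k by blast
  from choice[OF this] obtain y :: "nat \<Rightarrow> nat \<Rightarrow> 'm" where
    "\<forall>k. k < d \<longrightarrow> (\<forall>n. y k n \<in> Mk (Suc k)) \<and> (\<forall>m\<in>Mk (Suc k). \<exists>n a. m - a *s y k n \<in> Mk k)"
    by blast
  then show ?thesis by (intro exI[of _ y]) auto
qed

definition yy :: "nat \<Rightarrow> nat \<Rightarrow> 'm" where
  "yy = (SOME y. \<forall>k<d. (\<forall>n. y k n \<in> Mk (Suc k)) \<and> (\<forall>m\<in>Mk (Suc k). \<exists>n a. m - a *s y k n \<in> Mk k))"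

lemma yy: "k < d \<Longrightarrow> m \<in> Mk (Suc k) \<Longrightarrow> \<exists>n a. m - a *s yy k n \<in> Mk k"
  using someI_ex[OF gen] unfolding yy_def[symmetric] by blast

definition zz :: "nat \<Rightarrow> 'm" where
  "zz i = (case prod_decode i of (k, n) \<Rightarrow> yy k n)"

lemma zz_enc: "zz (prod_encode (k, n)) = yy k n" unfolding zz_def by simp

lemma Mk_span: "k \<le> d \<Longrightarrow> Mk k \<subseteq> span (range zz)"
proof (induction k)
  case 0
  show ?case unfolding Mk_0 using span_zero by simp
next
  case (Suc k)
  have kd: "k < d" using Suc.prems by simp
  have IH: "Mk k \<subseteq> span (range zz)" using Suc.IH Suc.prems by simp
  show ?case
  proof
    fix m assume m: "m \<in> Mk (Suc k)"
    obtain n a where "m - a *s yy k n \<in> Mk k" using yy[OF kd m] by blast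
    then have 1: "m - a *s yy k n \<in> span (range zz)" using IH by blast
    have "yy k n \<in> range zz" unfolding zz_enc[of k n, symmetric] by (rule rangeI)
    then have 2: "a *s yy k n \<in> span (range zz)" by (intro span_scale span_base)
    have "(m - a *s yy k n) + a *s yy k n \<in> span (range zz)" by (rule span_add[OF 1 2])
    then show "m \<in> span (range zz)" by simp
  qed
qed

lemma all_span: "m \<in> span (range zz)" using Mk_span[of d] Mk_full by auto

lemma fin_range: fixes f :: "nat \<Rightarrow> 'b" shows "finite t \<Longrightarrow> t \<subseteq> range f \<Longrightarrow> \<exists>N. t \<subseteq> f ` {..<N}"
proof (induction t rule: finite_induct)
  case empty
  then show ?case by auto
next
  case (insert x t)
  then obtain N where N: "t \<subseteq> f ` {..<N}" by auto
  obtain i where "x = f i" using insert.prems by auto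
  then have "insert x t \<subseteq> f ` {..<max N (Suc i)}" using N by auto
  then show ?case by blast
qed

lemma prefix: "\<exists>N. m \<in> span (zz ` {..<N})"
proof -
  obtain t r where t: "m = (\<Sum>a\<in>t. r a *s a)" "finite t" "t \<subseteq> range zz"
    using all_span[of m] unfolding span_explicit by blast
  then obtain N where N: "t \<subseteq> zz ` {..<N}" using fin_range by blast
  have "m \<in> span t" unfolding t(1) by (intro span_sum span_scale span_base)
  then show ?thesis using span_mono[OF N] by blast
qed

end

context msetup begin

lemma min_elem:
  assumes "finite X" "X \<noteq> {}" "\<forall>x\<in>X. x \<noteq> (0::'r fract)"
  shows "\<exists>x0\<in>X. \<forall>x\<in>X. inR (x / x0)"
  using assms
proof (induction X rule: finite_ne_induct)
  case (singleton x)
  then show ?case by simp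
next
  case (insert x X)
  then obtain x0 where x0: "x0 \<in> X" "\<forall>y\<in>X. inR (y / x0)" by auto
  have xnz: "x \<noteq> 0" and x0nz: "x0 \<noteq> 0" using insert.prems x0 by auto
  show ?case
  proof (cases "inR (x / x0)")
    case True
    then show ?thesis using x0 x0nz by auto
  next
    case False
    then have xx: "inR (x0 / x)" using val_total[OF VR, of "x / x0"] by simp
    have "inR (y / x)" if "y \<in> X" for y
    proof -
      have "y / x = (y / x0) * (x0 / x)" using x0nz by simp
      then show ?thesis using x0(2) that xx by (metis inR_mult)
    qed
    then show ?thesis using xnz by auto
  qed
qed

lemma span_sub_span: "A \<subseteq> span S \<Longrightarrow> span A \<subseteq> span S"
  by (rule span_minimal) auto

lemma tri_exists:
  "k \<le> d \<Longrightarrow> finite S \<Longrightarrow> S \<subseteq> Mk k \<Longrightarrow>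
   \<exists>T lev. finite T \<and> T \<subseteq> span S \<and> S \<subseteq> span T \<and> inj_on lev T \<and>
     (\<forall>t\<in>T. lev t < k \<and> t \<in> Mk (Suc (lev t)) \<and> co t (lev t) \<noteq> 0)"
proof (induction k arbitrary: S)
  case 0
  then have "S \<subseteq> {0}" using Mk_0 by simp
  then have "S \<subseteq> span {}" by simp
  then show ?case by (intro exI[of _ "{}"]) auto
next
  case (Suc k)
  have kd: "k < d" using Suc.prems by simp
  define S1 where "S1 = {s\<in>S. co s k \<noteq> 0}"
  show ?case
  proof (cases "S1 = {}")
    case True
    then have "S \<subseteq> Mk k" using Suc.prems Mk_down unfolding S1_def by blast
    then obtain T lev where T: "finite T" "T \<subseteq> span S" "S \<subseteq> span T" "inj_on lev T"
      "\<forall>t\<in>T. lev t < k \<and> t \<in> Mk (Suc (lev t)) \<and> co t (lev t) \<noteq> 0"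
      using Suc.IH[of S] Suc.prems by auto
    then show ?thesis by (intro exI[of _ T] exI[of _ lev]) auto
  next
    case False
    have finS1: "finite S1" using Suc.prems unfolding S1_def by simp
    have f1: "finite ((\<lambda>s. co s k) ` S1)" using finS1 by simp
    have f2: "(\<lambda>s. co s k) ` S1 \<noteq> {}" using False by simp
    have f3: "\<forall>x\<in>(\<lambda>s. co s k) ` S1. x \<noteq> 0" unfolding S1_def by auto
    have "\<exists>x0\<in>(\<lambda>s. co s k) ` S1. \<forall>x\<in>(\<lambda>s. co s k) ` S1. inR (x / x0)"
      by (rule min_elem[OF f1 f2 f3])
    then obtain s0 where s0: "s0 \<in> S1" and s0m: "\<forall>s\<in>S1. inR (co s k / co s0 k)" by auto
    have s0nz: "co s0 k \<noteq> 0" using s0 unfolding S1_def by simp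
    have "\<forall>s\<in>S1. \<exists>a. co s k / co s0 k = Fract a 1" using s0m unfolding inR_def by blast
    then obtain A where A: "\<forall>s\<in>S1. co s k / co s0 k = Fract (A s) 1" by metis
    define S' where "S' = (\<lambda>s. s - A s *s s0) ` S1 \<union> (S - S1)"
    have SMk: "S \<subseteq> Mk (Suc k)" using Suc.prems by simp
    have s0M: "s0 \<in> Mk (Suc k)" using s0 SMk unfolding S1_def by blast
    have S'Mk: "S' \<subseteq> Mk k"
    proof
      fix x assume "x \<in> S'"
      then consider (a) s where "s \<in> S1" "x = s - A s *s s0" | (b) "x \<in> S - S1" unfolding S'_def by blast
      then show "x \<in> Mk k"
      proof cases
        case (a s)
        have sM: "s \<in> Mk (Suc k)" using a SMk unfolding S1_def by blast
        have "co x k = co s k - Fract (A s) 1 * co s0 k" using a kd by (simp add: co_diff co_scale)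
        also have "\<dots> = 0"
        proof -
          have q: "co s k / co s0 k = Fract (A s) 1" using A a(1) by blast
          have "co s k = Fract (A s) 1 * co s0 k" using q s0nz by (simp add: divide_eq_eq)
          then show ?thesis by simp
        qed
        finally have "co x k = 0" .
        moreover have "x \<in> Mk (Suc k)" unfolding a(2) using sM s0M by (intro Mk_diff Mk_scale)
        ultimately show ?thesis using Mk_down by blast
      next
        case b
        then show ?thesis using SMk Mk_down unfolding S1_def by blast
      qed
    qed
    have finS': "finite S'" unfolding S'_def using finS1 Suc.prems by simp
    obtain T' lev' where T': "finite T'" "T' \<subseteq> span S'" "S' \<subseteq> span T'" "inj_on lev' T'"
      "\<forall>t\<in>T'. lev' t < k \<and> t \<in> Mk (Suc (lev' t)) \<and> co t (lev' t) \<noteq> 0"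
      using Suc.IH[OF _ finS' S'Mk] kd by auto
    have T'k: "co t k = 0" if "t \<in> T'" for t
      using T'(5) that Mk_co[of t "Suc (lev' t)" k] kd by auto
    have s0T': "s0 \<notin> T'" using T'k s0nz by blast
    define T where "T = insert s0 T'"
    define lev where "lev = lev'(s0 := k)"
    have levT': "lev t = lev' t" if "t \<in> T'" for t using that s0T' unfolding lev_def by auto
    have "S' \<subseteq> span S"
    proof
      fix x assume "x \<in> S'"
      then consider (a) s where "s \<in> S1" "x = s - A s *s s0" | (b) "x \<in> S - S1" unfolding S'_def by blast
      then show "x \<in> span S"
      proof cases
        case (a s)
        have "s \<in> S" "s0 \<in> S" using a s0 unfolding S1_def by auto
        then show ?thesis unfolding a(2) by (intro span_diff span_scale span_base)
      next
        case b
        then show ?thesis by (auto intro: span_base)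
      qed
    qed
    then have T'S: "T' \<subseteq> span S" using T'(2) span_sub_span by blast
    have s0S: "s0 \<in> S" using s0 unfolding S1_def by auto
    have "T \<subseteq> span S" unfolding T_def using T'S s0S span_base by blast
    moreover have "S \<subseteq> span T"
    proof
      fix s assume s: "s \<in> S"
      have spT': "span T' \<subseteq> span T" unfolding T_def by (rule span_mono) auto
      show "s \<in> span T"
      proof (cases "s \<in> S1")
        case True
        then have "s - A s *s s0 \<in> S'" unfolding S'_def by blast
        then have 1: "s - A s *s s0 \<in> span T" using T'(3) spT' by blast
        have 2: "A s *s s0 \<in> span T" unfolding T_def by (intro span_scale span_base) simp
        have "(s - A s *s s0) + A s *s s0 \<in> span T" by (rule span_add[OF 1 2])
        then show ?thesis by simp
      next
        case False
        then have "s \<in> S'" unfolding S'_def using s by blast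
        then show ?thesis using T'(3) spT' by blast
      qed
    qed
    moreover have "inj_on lev T"
      unfolding T_def using T'(4) T'(5) levT' s0T'
      by (auto simp: inj_on_def lev_def)
    moreover have "\<forall>t\<in>T. lev t < Suc k \<and> t \<in> Mk (Suc (lev t)) \<and> co t (lev t) \<noteq> 0"
      unfolding T_def using T'(5) levT' s0M s0nz by (auto simp: lev_def)
    moreover have "finite T" unfolding T_def using T'(1) by simp
    ultimately show ?thesis by blast
  qed
qed

end

context msetup begin

lemma tri_indep:
  fixes g :: "nat \<Rightarrow> 'm" and lv :: "nat \<Rightarrow> nat"
  assumes inj: "inj_on lv {..<K}"
    and tri: "\<forall>a<K. lv a < d \<and> g a \<in> Mk (Suc (lv a)) \<and> co (g a) (lv a) \<noteq> 0"
    and z: "(\<Sum>a<K. u a *s g a) = 0"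
  shows "\<forall>a<K. u a = 0"
proof (rule ccontr)
  assume neg: "\<not> ?thesis"
  define A where "A = {a. a < K \<and> u a \<noteq> 0}"
  have finA: "finite A" unfolding A_def by simp
  have neA: "A \<noteq> {}" using neg unfolding A_def by auto
  define L where "L = Max (lv ` A)"
  have "L \<in> lv ` A" unfolding L_def using finA neA by (intro Max_in) auto
  then obtain a0 where a0: "a0 \<in> A" "lv a0 = L" by blast
  have Lmax: "lv a \<le> L" if "a \<in> A" for a unfolding L_def using finA that by (intro Max_ge) auto
  have a0K: "a0 < K" and ua0: "u a0 \<noteq> 0" using a0 unfolding A_def by auto
  have Ld: "L < d" using tri a0K a0 by auto
  have term0: "Fract (u a) 1 * co (g a) L = 0" if "a < K" "a \<noteq> a0" for a
  proof (cases "u a = 0")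
    case True
    then show ?thesis by (simp add: Fract_eq0[of 0, simplified] Zero_fract_def[symmetric])
  next
    case False
    then have "a \<in> A" unfolding A_def using that by simp
    then have "lv a \<le> L" by (rule Lmax)
    moreover have "lv a \<noteq> L" using inj that a0 a0K unfolding inj_on_def by auto
    ultimately have "Suc (lv a) \<le> L" by simp
    then have "co (g a) L = 0" using Mk_co[of "g a" "Suc (lv a)" L] tri that Ld by auto
    then show ?thesis by simp
  qed
  have "0 = co (\<Sum>a<K. u a *s g a) L" using z co_zero Ld by simp
  also have "\<dots> = (\<Sum>a<K. Fract (u a) 1 * co (g a) L)" using Ld by (simp add: co_sum co_scale)
  also have "\<dots> = Fract (u a0) 1 * co (g a0) L + (\<Sum>a\<in>{..<K} - {a0}. Fract (u a) 1 * co (g a) L)"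
    using a0K by (simp add: sum.remove)
  also have "(\<Sum>a\<in>{..<K} - {a0}. Fract (u a) 1 * co (g a) L) = 0"
    using term0 by (intro sum.neutral) auto
  finally have "Fract (u a0) 1 * co (g a0) L = 0" by simp
  moreover have "Fract (u a0) 1 \<noteq> 0" using ua0 by (simp add: Fract_eq0)
  moreover have "co (g a0) L \<noteq> 0" using tri a0K a0 by auto
  ultimately show False by simp
qed

lemma tri_unique:
  fixes g :: "nat \<Rightarrow> 'm" and lv :: "nat \<Rightarrow> nat"
  assumes inj: "inj_on lv {..<K}"
    and tri: "\<forall>a<K. lv a < d \<and> g a \<in> Mk (Suc (lv a)) \<and> co (g a) (lv a) \<noteq> 0"
    and e: "(\<Sum>a<K. u a *s g a) = (\<Sum>a<K. w a *s g a)"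
  shows "\<forall>a<K. u a = w a"
proof -
  have "(\<Sum>a<K. (u a - w a) *s g a) = 0"
    using e by (simp add: scale_left_diff_distrib sum_subtractf)
  from tri_indep[OF inj tri this] show ?thesis by simp
qed

lemma basis_exists:
  assumes finS: "finite S"
  shows "\<exists>K (g::nat \<Rightarrow> 'm). K \<le> d \<and> (\<forall>m. m \<in> span S \<longleftrightarrow> (\<exists>c. m = (\<Sum>a<K. c a *s g a))) \<and>
     (\<forall>u w. (\<Sum>a<K. u a *s g a) = (\<Sum>a<K. w a *s g a) \<longrightarrow> (\<forall>a<K. u a = w a))"
proof -
  obtain T lev where T: "finite T" "T \<subseteq> span S" "S \<subseteq> span T" "inj_on lev T"
    "\<forall>t\<in>T. lev t < d \<and> t \<in> Mk (Suc (lev t)) \<and> co t (lev t) \<noteq> 0"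
    using tri_exists[of d S] finS Mk_full by auto
  have spT: "span T = span S"
    using T(2,3) span_sub_span by blast
  obtain h where h: "bij_betw h {..<card T} T"
    using ex_bij_betw_nat_finite[OF T(1)] by (auto simp: lessThan_atLeast0)
  define K where "K = card T"
  have "card T \<le> card {..<d}"
    using T(4,5) by (intro card_inj_on_le[of lev]) auto
  then have Kd: "K \<le> d" unfolding K_def by simp
  have hT: "h a \<in> T" if "a < K" for a using h that unfolding K_def bij_betw_def by auto
  have injlv: "inj_on (lev \<circ> h) {..<K}"
    using h T(4) unfolding K_def bij_betw_def by (intro comp_inj_on) auto
  have tri: "\<forall>a<K. (lev \<circ> h) a < d \<and> h a \<in> Mk (Suc ((lev \<circ> h) a)) \<and> co (h a) ((lev \<circ> h) a) \<noteq> 0"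
    using T(5) hT by auto
  have span_iff: "m \<in> span S \<longleftrightarrow> (\<exists>c. m = (\<Sum>a<K. c a *s h a))" for m
  proof
    assume "m \<in> span S"
    then have "m \<in> span T" using spT by simp
    then obtain u where "m = (\<Sum>v\<in>T. u v *s v)" using span_finite[OF T(1)] by auto
    also have "\<dots> = (\<Sum>a<K. u (h a) *s h a)"
      unfolding K_def using sum.reindex_bij_betw[OF h, of "\<lambda>v. u v *s v"] by simp
    finally show "\<exists>c. m = (\<Sum>a<K. c a *s h a)" by (intro exI[of _ "\<lambda>a. u (h a)"])
  next
    assume "\<exists>c. m = (\<Sum>a<K. c a *s h a)"
    then obtain c where c: "m = (\<Sum>a<K. c a *s h a)" by blast
    have "m \<in> span T" unfolding c using hT by (intro span_sum span_scale span_base) auto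
    then show "m \<in> span S" using spT by simp
  qed
  show ?thesis
    using Kd span_iff tri_unique[OF injlv tri] by blast
qed

end

context msetup begin

definition NN :: "nat \<Rightarrow> 'm set" where "NN n = span (zz ` {..<n})"

lemma NN_mono: "n \<le> n' \<Longrightarrow> NN n \<subseteq> NN n'"
  unfolding NN_def by (intro span_mono image_mono) auto

lemma NN_all: "\<exists>n. m \<in> NN n" unfolding NN_def using prefix by blast

lemma KG_ex: "\<exists>(K::nat \<Rightarrow> nat) (G::nat \<Rightarrow> nat \<Rightarrow> 'm). \<forall>n. K n \<le> d \<and>
   (\<forall>m. m \<in> NN n \<longleftrightarrow> (\<exists>c. m = (\<Sum>a<K n. c a *s G n a))) \<and>
   (\<forall>u w. (\<Sum>a<K n. u a *s G n a) = (\<Sum>a<K n. w a *s G n a) \<longrightarrow> (\<forall>a<K n. u a = w a))"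
proof -
  have "\<forall>n. \<exists>p::nat \<times> (nat \<Rightarrow> 'm). fst p \<le> d \<and>
     (\<forall>m. m \<in> NN n \<longleftrightarrow> (\<exists>c. m = (\<Sum>a<fst p. c a *s snd p a))) \<and>
     (\<forall>u w. (\<Sum>a<fst p. u a *s snd p a) = (\<Sum>a<fst p. w a *s snd p a) \<longrightarrow> (\<forall>a<fst p. u a = w a))"
  proof
    fix n
    obtain K g where "K \<le> d \<and> (\<forall>m. m \<in> span (zz ` {..<n}) \<longleftrightarrow> (\<exists>c. m = (\<Sum>a<K. c a *s g a))) \<and>
     (\<forall>u w. (\<Sum>a<K. u a *s g a) = (\<Sum>a<K. w a *s g a) \<longrightarrow> (\<forall>a<K. u a = w a))"
      using basis_exists[of "zz ` {..<n}"] by blast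
    then show "\<exists>p::nat \<times> (nat \<Rightarrow> 'm). fst p \<le> d \<and>
     (\<forall>m. m \<in> NN n \<longleftrightarrow> (\<exists>c. m = (\<Sum>a<fst p. c a *s snd p a))) \<and>
     (\<forall>u w. (\<Sum>a<fst p. u a *s snd p a) = (\<Sum>a<fst p. w a *s snd p a) \<longrightarrow> (\<forall>a<fst p. u a = w a))"
      unfolding NN_def by (intro exI[of _ "(K, g)"]) simp
  qed
  from choice[OF this] obtain f :: "nat \<Rightarrow> nat \<times> (nat \<Rightarrow> 'm)" where f: "\<forall>n. fst (f n) \<le> d \<and>
     (\<forall>m. m \<in> NN n \<longleftrightarrow> (\<exists>c. m = (\<Sum>a<fst (f n). c a *s snd (f n) a))) \<and>
     (\<forall>u w. (\<Sum>a<fst (f n). u a *s snd (f n) a) = (\<Sum>a<fst (f n). w a *s snd (f n) a) \<longrightarrow> (\<forall>a<fst (f n). u a = w a))"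
    by blast
  show ?thesis
    by (rule exI[of _ "\<lambda>n. fst (f n)"], rule exI[of _ "\<lambda>n. snd (f n)"]) (use f in simp)
qed

definition KK :: "nat \<Rightarrow> nat" where "KK = (SOME K. \<exists>G. \<forall>n. K n \<le> d \<and>
   (\<forall>m. m \<in> NN n \<longleftrightarrow> (\<exists>c. m = (\<Sum>a<K n. c a *s G n a))) \<and>
   (\<forall>u w. (\<Sum>a<K n. u a *s G n a) = (\<Sum>a<K n. w a *s G n a) \<longrightarrow> (\<forall>a<K n. u a = w a)))"

definition GG :: "nat \<Rightarrow> nat \<Rightarrow> 'm" where "GG = (SOME G. \<forall>n. KK n \<le> d \<and>
   (\<forall>m. m \<in> NN n \<longleftrightarrow> (\<exists>c. m = (\<Sum>a<KK n. c a *s G n a))) \<and>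
   (\<forall>u w. (\<Sum>a<KK n. u a *s G n a) = (\<Sum>a<KK n. w a *s G n a) \<longrightarrow> (\<forall>a<KK n. u a = w a)))"

lemma KG: "\<forall>n. KK n \<le> d \<and>
   (\<forall>m. m \<in> NN n \<longleftrightarrow> (\<exists>c. m = (\<Sum>a<KK n. c a *s GG n a))) \<and>
   (\<forall>u w. (\<Sum>a<KK n. u a *s GG n a) = (\<Sum>a<KK n. w a *s GG n a) \<longrightarrow> (\<forall>a<KK n. u a = w a))"
proof -
  have "\<exists>G. \<forall>n. KK n \<le> d \<and>
   (\<forall>m. m \<in> NN n \<longleftrightarrow> (\<exists>c. m = (\<Sum>a<KK n. c a *s G n a))) \<and>
   (\<forall>u w. (\<Sum>a<KK n. u a *s G n a) = (\<Sum>a<KK n. w a *s G n a) \<longrightarrow> (\<forall>a<KK n. u a = w a))"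
    unfolding KK_def using KG_ex by (rule someI_ex)
  then show ?thesis unfolding GG_def by (rule someI_ex)
qed

lemma KK_le: "KK n \<le> d" using KG by blast
lemma NN_iff: "m \<in> NN n \<longleftrightarrow> (\<exists>c. m = (\<Sum>a<KK n. c a *s GG n a))" using KG by blast
lemma GG_uniq: "(\<Sum>a<KK n. u a *s GG n a) = (\<Sum>a<KK n. w a *s GG n a) \<Longrightarrow> a < KK n \<Longrightarrow> u a = w a"
  using KG by blast

lemma delta_sum: fixes K :: nat shows "a < K \<Longrightarrow> (\<Sum>b<K. (if a = b then 1 else 0) *s G b) = G a"
proof -
  assume a: "a < K"
  have "(\<Sum>b<K. (if a = b then 1 else 0) *s G b) = (\<Sum>b<K. if a = b then G b else 0)"
    by (intro sum.cong) auto
  also have "\<dots> = G a" using a by (simp add: sum.delta')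
  finally show ?thesis .
qed

lemma GG_in: "a < KK i \<Longrightarrow> GG i a \<in> NN i"
  unfolding NN_iff using delta_sum[of a "KK i" "GG i"] by metis

definition AA :: "nat \<Rightarrow> nat \<Rightarrow> nat \<Rightarrow> nat \<Rightarrow> 'r" where
  "AA i j a = (SOME c. GG i a = (\<Sum>b<KK j. c b *s GG j b))"

lemma AA: "i \<le> j \<Longrightarrow> a < KK i \<Longrightarrow> GG i a = (\<Sum>b<KK j. AA i j a b *s GG j b)"
proof -
  assume ij: "i \<le> j" and a: "a < KK i"
  have "GG i a \<in> NN j" using GG_in[OF a] NN_mono[OF ij] by blast
  then have "\<exists>c. GG i a = (\<Sum>b<KK j. c b *s GG j b)" using NN_iff by blast
  then show ?thesis unfolding AA_def by (rule someI_ex)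
qed

lemma swap_sum: "(\<Sum>a<Ka. x a *s (\<Sum>b<Kb. y a b *s v b)) = (\<Sum>b<Kb. (\<Sum>a<Ka. x a * y a b) *s v b)"
proof -
  have "(\<Sum>a<Ka. x a *s (\<Sum>b<Kb. y a b *s v b)) = (\<Sum>a<Ka. \<Sum>b<Kb. (x a * y a b) *s v b)"
    by (simp add: scale_sum_right)
  also have "\<dots> = (\<Sum>b<Kb. \<Sum>a<Ka. (x a * y a b) *s v b)" by (rule sum.swap)
  also have "\<dots> = (\<Sum>b<Kb. (\<Sum>a<Ka. x a * y a b) *s v b)" by (simp add: scale_sum_left)
  finally show ?thesis .
qed

lemma colim: "free_countable_filtered_colimit scale p d"
  unfolding free_countable_filtered_colimit_def
proof (intro exI[of _ "UNIV :: nat set"] exI[of _ "(\<le>) :: nat \<Rightarrow> nat \<Rightarrow> bool"] exI[of _ KK]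
    exI[of _ AA] exI[of _ GG] conjI ballI allI impI)
  show "UNIV \<noteq> {}" by simp
  show "i \<le> i" for i :: nat by simp
  show "i \<le> l" if "i \<le> j" "j \<le> l" for i j l :: nat using that by simp
  show "\<exists>l\<in>UNIV. i \<le> l \<and> j \<le> l" for i j :: nat by (intro bexI[of _ "max i j"]) auto
  show "KK i \<le> d" for i by (rule KK_le)
next
  fix i a b assume a: "a < KK i" and b: "b < KK i"
  have "(\<Sum>b<KK i. AA i i a b *s GG i b) = (\<Sum>b<KK i. (if a = b then 1 else 0) *s GG i b)"
    using AA[OF order_refl a] delta_sum[OF a, of "GG i"] by simp
  then have "AA i i a b = (if a = b then 1 else 0)"
    using GG_uniq[where n=i and u="\<lambda>b. AA i i a b" and w="\<lambda>b. if a = b then 1 else 0" and a=b] b by blast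
  then show "of_nat p dvd (AA i i a b - (if a = b then 1 else 0))" by simp
next
  fix i j l a c assume ij: "i \<le> j" and jl: "j \<le> l" and a: "a < KK i" and c: "c < KK l"
  have "(\<Sum>c<KK l. AA i l a c *s GG l c) = GG i a" using AA[OF order_trans[OF ij jl] a] by simp
  also have "\<dots> = (\<Sum>b<KK j. AA i j a b *s GG j b)" using AA[OF ij a] .
  also have "\<dots> = (\<Sum>b<KK j. AA i j a b *s (\<Sum>c<KK l. AA j l b c *s GG l c))"
    using AA[OF jl] by (intro sum.cong) auto
  also have "\<dots> = (\<Sum>c<KK l. (\<Sum>b<KK j. AA i j a b * AA j l b c) *s GG l c)" by (rule swap_sum)
  finally have "AA i l a c = (\<Sum>b<KK j. AA i j a b * AA j l b c)"
    using GG_uniq[where n=l and u="\<lambda>c. AA i l a c" and w="\<lambda>c. \<Sum>b<KK j. AA i j a b * AA j l b c" and a=c] c by blast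
  then show "of_nat p dvd (AA i l a c - (\<Sum>b<KK j. AA i j a b * AA j l b c))" by simp
next
  fix i j a assume ij: "i \<le> j" and a: "a < KK i"
  have "GG i a - (\<Sum>b<KK j. AA i j a b *s GG j b) = of_nat p *s 0" using AA[OF ij a] by simp
  then show "in_pM scale p (GG i a - (\<Sum>b<KK j. AA i j a b *s GG j b))" unfolding in_pM_def by blast
next
  fix m
  obtain n where "m \<in> NN n" using NN_all by blast
  then obtain c where "m = (\<Sum>a<KK n. c a *s GG n a)" using NN_iff by blast
  then have "in_pM scale p (m - (\<Sum>a<KK n. c a *s GG n a))" unfolding in_pM_def
    by (intro exI[of _ 0]) simp
  then show "\<exists>i\<in>UNIV. \<exists>c. in_pM scale p (m - (\<Sum>a<KK i. c a *s GG i a))" by blast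
next
  fix i and c :: "nat \<Rightarrow> 'r"
  assume "in_pM scale p (\<Sum>a<KK i. c a *s GG i a)"
  then obtain m' where m': "(\<Sum>a<KK i. c a *s GG i a) = of_nat p *s m'" unfolding in_pM_def by blast
  obtain j0 where "m' \<in> NN j0" using NN_all by blast
  define j where "j = max i j0"
  have ij: "i \<le> j" unfolding j_def by simp
  have "m' \<in> NN j" using \<open>m' \<in> NN j0\<close> NN_mono[of j0 j] unfolding j_def by auto
  then obtain w where w: "m' = (\<Sum>b<KK j. w b *s GG j b)" using NN_iff by blast
  have "(\<Sum>b<KK j. (\<Sum>a<KK i. c a * AA i j a b) *s GG j b) = (\<Sum>a<KK i. c a *s (\<Sum>b<KK j. AA i j a b *s GG j b))"
    by (rule swap_sum[symmetric])
  also have "\<dots> = (\<Sum>a<KK i. c a *s GG i a)" using AA[OF ij] by (intro sum.cong) auto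
  also have "\<dots> = of_nat p *s (\<Sum>b<KK j. w b *s GG j b)" using m' w by simp
  also have "\<dots> = (\<Sum>b<KK j. (of_nat p * w b) *s GG j b)" by (simp add: scale_sum_right)
  finally have eq: "\<forall>b<KK j. (\<Sum>a<KK i. c a * AA i j a b) = of_nat p * w b"
    using GG_uniq[where n=j and u="\<lambda>b. \<Sum>a<KK i. c a * AA i j a b" and w="\<lambda>b. of_nat p * w b"] by blast
  have "\<forall>b<KK j. of_nat p dvd (\<Sum>a<KK i. c a * AA i j a b)" using eq by simp
  then show "\<exists>j\<in>UNIV. i \<le> j \<and> (\<forall>b<KK j. of_nat p dvd (\<Sum>a<KK i. c a * AA i j a b))"
    using ij by blast
qed

end

theorem lemma3p10:
  fixes scale :: "'r::idom \<Rightarrow> 'm::ab_group_add \<Rightarrow> 'm"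
    and p :: nat and B :: "'m set"
  assumes "prime p"
    and "valuation_ring TYPE('r)"
    and "finite_rank TYPE('r)"
    and "module scale"
    and "torsionfree scale"
    and "tensor_basis scale B"
  shows "free_countable_filtered_colimit scale p (card B)"
proof -
  interpret M: msetup scale B
    by (intro msetup.intro msetup_axioms.intro) (use assms in auto)
  show ?thesis by (rule M.colim)
qed

end
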